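(* Let $M=\{(z_1,z_2)\in\mathbb{C}^2:\operatorname{Im} z_2=|z_1|^2\}$. Let $\pi_1:U_1\to\mathbb{C}^2$ be the blow-up of the origin, with exceptional curve $E_1$, and let $M_1=\overline{\pi_1^{-1}(M\setminus\{0\})}$ be the proper transform of $M$. Let $U_1'$ be the affine chart of $U_1$ with coordinates $(z_1',z_2')$ in which $\pi_1(z_1',z_2')=(z_1',z_1'z_2')$, and let $\pi_2:U_2\to U_1'$ be the blow-up of the origin $0_1'$ of $U_1'$, with exceptional curve $E_2$, and $M_2=\overline{\pi_2^{-1}(M_1\cap U_1'\setminus\{0_1'\})}$. Let $U_2'$ be the affine chart of $U_2$ with coordinates $(u_1,u_2)$ in which $\pi_2(u_1,u_2)=(u_1,u_1u_2)$, and $0_2'$ its origin. Then: (a) $E_1\subset M_1$; (b) $M_2\cap E_2$ is a closed disk, given in $U_2'$ by $\{u_1=0,\ |u_2|\ge 1\}$ (together with the point of $E_2$ at infinity of this chart); (c) $0_2'\notin M_2$, so that if $\pi_3$ is the blow-up of $U_2$ at $0_2'$ with exceptional curve $E_3$, the proper transform $M_3$ of $M_2$ satisfies $M_3\cap E_3=\varnothing$. *)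

theory Defs
  imports "HOL-Analysis.Analysis"
begin

text \<open>A point of the projective line CP^1
  (a complex line through 0 in C^2) is represented by the orthogonal projection matrix
  onto that line, written as ((P11, P12), (P21, P22)).  This realises CP^1 with its
  usual topology as a subspace of C^4.\<close>

type_synonym c2 = "complex \<times> complex"
type_synonym mat2 = "(complex \<times> complex) \<times> (complex \<times> complex)"

definition proj_line :: "c2 \<Rightarrow> mat2" where
  "proj_line v = (let a = fst v; b = snd v;
                      n = complex_of_real ((cmod a)^2 + (cmod b)^2)
                  in ((a * cnj a / n, a * cnj b / n), (b * cnj a / n, b * cnj b / n)))"

definition blowup :: "(c2 \<times> mat2) set" where
  "blowup = {(z, proj_line v) | z v. v \<noteq> (0, 0) \<and> (\<exists>c. z = (c * fst v, c * snd v))}"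

definition exceptional :: "(c2 \<times> mat2) set" where
  "exceptional = {p \<in> blowup. fst p = (0, 0)}"

definition proper_transform :: "c2 set \<Rightarrow> (c2 \<times> mat2) set" where
  "proper_transform S = closure {p \<in> blowup. fst p \<in> S - {(0, 0)}} \<inter> blowup"

definition chart :: "c2 \<Rightarrow> c2 \<times> mat2" where
  "chart q = ((fst q, fst q * snd q), proj_line (1, snd q))"

definition hyperquadric :: "c2 set" where
  "hyperquadric = {(z1, z2). Im z2 = (cmod z1)^2}"

end

theory Submission imports Defs begin

lemma cnj_mult_self: "a * cnj a = complex_of_real ((cmod a)^2)"
  by (simp add: complex_mult_cnj cmod_power2)

lemma proj_line_scale:
  assumes "c \<noteq> 0"
  shows "proj_line (c*a, c*b) = proj_line (a,b)"
proof -
  define K where "K = c * cnj c"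
  define N where "N = complex_of_real ((cmod a)^2 + (cmod b)^2)"
  have cc: "K = complex_of_real ((cmod c)^2)" unfolding K_def by (rule cnj_mult_self)
  have n: "complex_of_real ((cmod (c*a))^2 + (cmod (c*b))^2) = K * N"
    unfolding cc N_def by (simp add: norm_mult power_mult_distrib algebra_simps)
  have cz: "K \<noteq> 0" using assms unfolding K_def by simp
  have g: "\<And>x. (K*x)/(K*N) = x/N" using cz by simp
  have e: "\<And>x y. c*x*cnj(c*y) = K*(x*cnj y)" unfolding K_def by (simp add: ac_simps)
  show ?thesis unfolding proj_line_def Let_def fst_conv snd_conv n N_def[symmetric]
    by (simp only: e g)
qed

lemma cont_pl1: "continuous_on UNIV (\<lambda>b::complex. proj_line (1,b))"
proof -
  have "\<And>b::complex. complex_of_real (1 + (cmod b)^2) \<noteq> 0"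
    by (metis add_pos_nonneg of_real_eq_0_iff zero_le_power2 zero_less_one order_less_irrefl)
  then show ?thesis unfolding proj_line_def Let_def fst_conv snd_conv
    by (intro continuous_intros) auto
qed

lemma cont_pl2: "continuous_on UNIV (\<lambda>w::complex. proj_line (w,1))"
proof -
  have "\<And>b::complex. complex_of_real ((cmod b)^2 + 1) \<noteq> 0"
    by (metis add_nonneg_pos of_real_eq_0_iff zero_le_power2 zero_less_one order_less_irrefl)
  then show ?thesis unfolding proj_line_def Let_def fst_conv snd_conv
    by (intro continuous_intros) auto
qed

lemma re_entries:
  shows "Re (fst (fst (proj_line v))) = (cmod (fst v))^2 / ((cmod (fst v))^2 + (cmod (snd v))^2)"
    and "Re (snd (snd (proj_line v))) = (cmod (snd v))^2 / ((cmod (fst v))^2 + (cmod (snd v))^2)"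
  unfolding proj_line_def Let_def by (simp_all only: cnj_mult_self fst_conv snd_conv flip: of_real_divide, simp_all)

definition hpt :: "complex \<Rightarrow> c2 \<times> mat2" where
  "hpt w = ((0,0), proj_line (w,1))"

definition TT :: "c2 set \<Rightarrow> (c2 \<times> mat2) set" where
  "TT S = {p \<in> blowup. fst p \<in> S - {(0, 0)}}"

definition CC :: "(c2 \<times> mat2) set" where
  "CC = {p. Re (fst (fst (snd p))) \<le> Re (snd (snd (snd p)))}"

lemma chart_blowup: "chart q \<in> blowup"
  unfolding chart_def blowup_def
  by (rule CollectI, rule exI[of _ "(fst q, fst q * snd q)"], rule exI[of _ "(1, snd q)"]) auto

lemma hpt_blowup: "hpt w \<in> blowup"
  unfolding hpt_def blowup_def
  by (rule CollectI, rule exI[of _ "(0,0)"], rule exI[of _ "(w,1)"]) auto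

lemma cont_chart: "continuous_on UNIV chart"
  unfolding chart_def
  by (intro continuous_intros continuous_on_compose2[OF cont_pl1]) auto

lemma cont_hpt: "continuous_on UNIV hpt"
  unfolding hpt_def
  by (intro continuous_intros continuous_on_compose2[OF cont_pl2]) auto

lemma hpt_chart: "w \<noteq> 0 \<Longrightarrow> hpt w = chart (0, 1/w)"
  unfolding hpt_def chart_def using proj_line_scale[of w 1 "1/w"] by simp

lemma blowup_fst0:
  assumes "p \<in> blowup" "fst p = (0,0)"
  shows "(\<exists>t. p = chart (0,t)) \<or> p = hpt 0"
proof -
  obtain z v where p: "p = (z, proj_line v)" "v \<noteq> (0,0)" using assms(1) unfolding blowup_def by auto
  have z: "z = (0,0)" using assms(2) p by simp
  obtain a b where v: "v = (a,b)" by (cases v)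
  show ?thesis
  proof (cases "a = 0")
    case True
    then have "b \<noteq> 0" using p v by auto
    then have "proj_line v = proj_line (0,1)" using proj_line_scale[of b 0 1] v True by simp
    then show ?thesis using p z unfolding hpt_def by simp
  next
    case False
    then have "proj_line v = proj_line (1, b/a)" using proj_line_scale[of a 1 "b/a"] v by simp
    then have "p = chart (0, b/a)" using p z unfolding chart_def by simp
    then show ?thesis by blast
  qed
qed

lemma seq_closure:
  assumes "X \<longlonglongrightarrow> q" "\<And>k. chart (X k) \<in> S"
  shows "chart q \<in> closure S"
proof -
  have "isCont chart q" using cont_chart continuous_on_eq_continuous_at open_UNIV by blast
  then have "(\<lambda>k. chart (X k)) \<longlonglongrightarrow> chart q" using assms(1) isCont_tendsto_compose by blast
  then show ?thesis using assms(2) closure_sequential[THEN iffD2] by (metis (mono_tags, lifting))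
qed

lemma hpt0_closure:
  assumes "\<And>k. hpt (1 / of_nat (Suc k)) \<in> closure S"
  shows "hpt 0 \<in> closure S"
proof -
  have "isCont hpt 0" using cont_hpt continuous_on_eq_continuous_at open_UNIV by blast
  moreover have "(\<lambda>k. 1 / complex_of_nat (Suc k)) \<longlonglongrightarrow> 0"
    using tendsto_of_real[OF LIMSEQ_inverse_real_of_nat, where 'a=complex]
    by (simp add: inverse_eq_divide)
  ultimately have "(\<lambda>k. hpt (1 / of_nat (Suc k))) \<longlonglongrightarrow> hpt 0" using isCont_tendsto_compose by blast
  then have "hpt 0 \<in> closure (closure S)" using assms closure_sequential[THEN iffD2] by (metis (mono_tags, lifting))
  then show ?thesis by simp
qed

lemma fst_closure: "proper_transform S \<subseteq> {p \<in> blowup. fst p \<in> closure S}"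
proof -
  have "closed (fst -` closure S :: (c2 \<times> mat2) set)" by (intro closed_vimage_fst) simp
  moreover have "TT S \<subseteq> fst -` closure S" unfolding TT_def using closure_subset by fastforce
  ultimately have "closure (TT S) \<subseteq> fst -` closure S" by (rule closure_minimal[rotated])
  then show ?thesis unfolding proper_transform_def TT_def by blast
qed

lemma closed_CC: "closed CC"
  unfolding CC_def by (intro closed_Collect_le continuous_intros)

lemma chart_CC: "chart q \<in> CC \<longleftrightarrow> 1 \<le> cmod (snd q)"
proof -
  have pos: "0 < 1 + (cmod (snd q))^2" by (simp add: add_pos_nonneg)
  have "chart q \<in> CC \<longleftrightarrow> 1 / (1 + (cmod (snd q))^2) \<le> (cmod (snd q))^2 / (1 + (cmod (snd q))^2)"
    unfolding CC_def chart_def using re_entries[of "(1, snd q)"] by simp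
  also have "\<dots> \<longleftrightarrow> 1 \<le> (cmod (snd q))^2" using pos by (simp add: divide_le_cancel)
  also have "\<dots> \<longleftrightarrow> 1 \<le> cmod (snd q)" using abs_le_square_iff[of 1 "cmod (snd q)"] by simp
  finally show ?thesis .
qed

lemma hpt_inj: "inj hpt"
proof (rule injI)
  fix w w' assume "hpt w = hpt w'"
  then have e: "proj_line (w,1) = proj_line (w',1)" unfolding hpt_def by simp
  have r: "snd (fst (proj_line (x,1))) / snd (snd (proj_line (x,1))) = x" for x
  proof -
    have "complex_of_real ((cmod x)^2 + 1) \<noteq> 0"
      by (metis add_nonneg_pos of_real_eq_0_iff zero_le_power2 zero_less_one order_less_irrefl)
    then show ?thesis unfolding proj_line_def Let_def by simp
  qed
  show "w = w'" using r[of w] r[of w'] e by metis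
qed

definition QQ :: "c2 set" where
  "QQ = {q. Im (fst q * snd q) = (cmod (fst q))^2}"

lemma e_tendsto: "(\<lambda>k. complex_of_real (1 / real (Suc k))) \<longlonglongrightarrow> 0"
  using tendsto_of_real[OF LIMSEQ_inverse_real_of_nat, where 'a=complex]
  by (simp add: inverse_eq_divide)

lemma unit_cnj: "cmod w = 1 \<Longrightarrow> w * cnj w = 1"
  using cnj_mult_self[of w] by simp

lemma chart_E1: "chart (0,t) \<in> closure (TT hyperquadric)"
proof -
  define w where "w = (if t = 0 then 1 else cnj t / complex_of_real (cmod t))"
  have w1: "cmod w = 1" unfolding w_def by (simp add: norm_divide)
  have wt: "Im (w * t) = 0"
  proof (cases "t = 0")
    case False
    then have "w * t = complex_of_real ((cmod t)^2 / cmod t)" unfolding w_def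
      using cnj_mult_self[of t] by (simp add: field_simps)
    then show ?thesis by simp
  qed (simp add: w_def)
  define e where "e k = 1 / real (Suc k)" for k
  define X where "X k = (complex_of_real (e k) * w, t + \<i> * complex_of_real (e k) * cnj w)" for k
  have "X \<longlonglongrightarrow> (0 * w, t + \<i> * 0 * cnj w)" unfolding X_def e_def
    by (intro tendsto_intros e_tendsto)
  then have lim: "X \<longlonglongrightarrow> (0, t)" by simp
  have mem: "chart (X k) \<in> TT hyperquadric" for k
  proof -
    have ep: "e k > 0" unfolding e_def by simp
    let ?x = "complex_of_real (e k) * w"
    have x0: "?x \<noteq> 0" using ep w1 by auto
    have "?x * (t + \<i> * complex_of_real (e k) * cnj w)
          = complex_of_real (e k) * (w * t) + \<i> * complex_of_real ((e k)^2) * (w * cnj w)"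
      by (simp add: algebra_simps power2_eq_square)
    also have "\<dots> = complex_of_real (e k) * (w * t) + \<i> * complex_of_real ((e k)^2)"
      using unit_cnj[OF w1] by simp
    finally have "Im (?x * (t + \<i> * complex_of_real (e k) * cnj w)) = (e k)^2"
      using wt by simp
    moreover have "(cmod ?x)^2 = (e k)^2" using w1 ep by (simp add: norm_mult)
    ultimately show ?thesis unfolding TT_def hyperquadric_def X_def chart_def
      using chart_blowup[of "X k"] x0 unfolding X_def chart_def by auto
  qed
  show ?thesis by (rule seq_closure[OF lim mem])
qed

lemma chart_E2:
  assumes u: "1 \<le> cmod u"
  shows "chart (0,u) \<in> closure (TT QQ)"
proof -
  define c where "c = sqrt ((cmod u)^2 - 1)"
  have u0: "u \<noteq> 0" using u by auto
  have c2: "c^2 + 1 = (cmod u)^2" unfolding c_def using u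
    by (simp add: abs_le_square_iff one_le_power)
  define w where "w = csqrt ((complex_of_real c + \<i>) / u)"
  have w2: "w^2 * u = complex_of_real c + \<i>" unfolding w_def using u0 by simp
  have "cmod (complex_of_real c + \<i>) = cmod u"
  proof -
    have "complex_of_real c + \<i> = Complex c 1" by (simp add: complex_eq_iff)
    then have "cmod (complex_of_real c + \<i>) = sqrt (c^2 + 1)" by (simp add: complex_norm)
    also have "\<dots> = cmod u" using c2 by simp
    finally show ?thesis .
  qed
  then have "(cmod w)^2 = 1" using w2 u0
    by (metis (no_types, lifting) div_self norm_divide norm_power norm_zero power2_csqrt w_def zero_less_norm_iff order_less_irrefl)
  then have w1: "cmod w = 1" using norm_ge_zero[of w] by (auto simp: power2_eq_1_iff)
  define e where "e k = 1 / real (Suc k)" for k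
  define X where "X k = (complex_of_real (e k) * w, u)" for k
  have "X \<longlonglongrightarrow> (0 * w, u)" unfolding X_def e_def
    by (intro tendsto_intros e_tendsto)
  then have lim: "X \<longlonglongrightarrow> (0, u)" by simp
  have mem: "chart (X k) \<in> TT QQ" for k
  proof -
    have ep: "e k > 0" unfolding e_def by simp
    let ?x = "complex_of_real (e k) * w"
    have x0: "?x \<noteq> 0" using ep w1 by auto
    have "?x * (?x * u) = complex_of_real ((e k)^2) * (w^2 * u)"
      by (simp add: algebra_simps power2_eq_square)
    then have "Im (?x * (?x * u)) = (e k)^2" using w2 by simp
    moreover have "(cmod ?x)^2 = (e k)^2" using w1 ep by (simp add: norm_mult)
    ultimately show ?thesis unfolding TT_def QQ_def X_def chart_def
      using chart_blowup[of "X k"] x0 unfolding X_def chart_def by auto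
  qed
  show ?thesis by (rule seq_closure[OF lim mem])
qed

lemma TT_QQ_CC: "TT QQ \<subseteq> CC"
proof
  fix p assume "p \<in> TT QQ"
  then obtain z v c where p: "p = (z, proj_line v)" "v \<noteq> (0,0)" "z = (c * fst v, c * snd v)"
    and zQ: "z \<in> QQ" and z0: "z \<noteq> (0,0)"
    unfolding TT_def blowup_def by auto
  have c0: "c \<noteq> 0" using z0 p by auto
  have "cmod (fst z) \<le> cmod (snd z)"
  proof (cases "fst z = 0")
    case False
    have "(cmod (fst z))^2 = Im (fst z * snd z)" using zQ unfolding QQ_def by simp
    also have "\<dots> \<le> cmod (fst z) * cmod (snd z)" using abs_Im_le_cmod[of "fst z * snd z"]
      by (simp add: norm_mult)
    finally show ?thesis using False by (simp add: power2_eq_square)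
  qed simp
  then have "cmod c * cmod (fst v) \<le> cmod c * cmod (snd v)" using p by (simp add: norm_mult)
  then have le: "cmod (fst v) \<le> cmod (snd v)" using c0 by simp
  have pos: "0 < (cmod (fst v))^2 + (cmod (snd v))^2"
    using p(2) by (cases v) (auto simp: add_pos_nonneg add_nonneg_pos)
  have "(cmod (fst v))^2 \<le> (cmod (snd v))^2" using le by (simp add: power_mono)
  then show "p \<in> CC" unfolding CC_def using p(1) re_entries[of v] pos
    by (simp add: divide_right_mono)
qed

lemma closure_TT_QQ: "closure (TT QQ) \<subseteq> CC"
  using TT_QQ_CC closed_CC closure_minimal by blast

lemma closed_hq: "closed hyperquadric"
proof -
  have "hyperquadric = {z. Im (snd z) = (cmod (fst z))^2}" unfolding hyperquadric_def by auto
  also have "closed \<dots>" by (intro closed_Collect_eq continuous_intros)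
  finally show ?thesis .
qed

lemma chart_M1: "chart -` proper_transform hyperquadric = QQ"
proof
  show "chart -` proper_transform hyperquadric \<subseteq> QQ"
  proof
    fix q assume "q \<in> chart -` proper_transform hyperquadric"
    then have "fst (chart q) \<in> hyperquadric" using fst_closure[of hyperquadric] closed_hq by auto
    then show "q \<in> QQ" unfolding chart_def hyperquadric_def QQ_def by simp
  qed
  show "QQ \<subseteq> chart -` proper_transform hyperquadric"
  proof
    fix q assume q: "q \<in> QQ"
    obtain a b where ab: "q = (a,b)" by (cases q)
    have "chart q \<in> closure (TT hyperquadric)"
    proof (cases "a = 0")
      case True then show ?thesis using chart_E1 ab by simp
    next
      case False
      then have "chart q \<in> TT hyperquadric" using q chart_blowup[of q] ab
        unfolding TT_def QQ_def chart_def hyperquadric_def by auto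
      then show ?thesis using closure_subset by blast
    qed
    then show "q \<in> chart -` proper_transform hyperquadric"
      using chart_blowup[of q] unfolding proper_transform_def TT_def by simp
  qed
qed

lemma E_eq: "exceptional = {p \<in> blowup. fst p = (0,0)}" by (simp add: exceptional_def)

theorem mainTheorem4:
  fixes M1 M2 M3 E1 E2 E3 :: "(c2 \<times> mat2) set"
  assumes "M1 = proper_transform hyperquadric"
      and "M2 = proper_transform (chart -` M1)"
      and "M3 = proper_transform (chart -` M2)"
      and "E1 = exceptional" and "E2 = exceptional" and "E3 = exceptional"
  shows "E1 \<subseteq> M1
    \<and> M2 \<inter> E2 = chart ` {(0, u2) | u2. cmod u2 \<ge> 1} \<union> {((0, 0), proj_line (0, 1))}
    \<and> (M2 \<inter> E2) homeomorphic cball (0::complex) 1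
    \<and> chart (0, 0) \<notin> M2
    \<and> M3 \<inter> E3 = {}"
proof -
  have "chart -` M1 = QQ" using assms(1) chart_M1 by simp
  then have "M2 = proper_transform QQ" using assms(2) by simp
  then have M2: "M2 = closure (TT QQ) \<inter> blowup" unfolding proper_transform_def TT_def by simp
  have hpt0: "hpt 0 = ((0, 0), proj_line (0, 1))" unfolding hpt_def by simp
  have A: "E1 \<subseteq> M1"
  proof
    fix p assume "p \<in> E1"
    then have pb: "p \<in> blowup" "fst p = (0,0)" using assms(4) E_eq by auto
    have "p \<in> closure (TT hyperquadric)"
    proof (cases "\<exists>t. p = chart (0,t)")
      case True then show ?thesis using chart_E1 by auto
    next
      case False
      then have "p = hpt 0" using blowup_fst0[OF pb] by blast
      moreover have "hpt 0 \<in> closure (TT hyperquadric)"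
      proof (rule hpt0_closure)
        fix k
        have "1 / complex_of_nat (Suc k) \<noteq> 0" by (simp del: of_nat_Suc)
        then show "hpt (1 / of_nat (Suc k)) \<in> closure (TT hyperquadric)"
          using hpt_chart chart_E1 by metis
      qed
      ultimately show ?thesis by simp
    qed
    then show "p \<in> M1" using pb assms(1) unfolding proper_transform_def TT_def by simp
  qed
  define R where "R = chart ` {(0, u2) | u2. cmod u2 \<ge> 1} \<union> {((0, 0), proj_line (0, 1))}"
  have B: "M2 \<inter> E2 = R"
  proof
    show "M2 \<inter> E2 \<subseteq> R"
    proof
      fix p assume p: "p \<in> M2 \<inter> E2"
      then have pb: "p \<in> blowup" "fst p = (0,0)" using assms(5) E_eq by auto
      have pC: "p \<in> CC" using p M2 closure_TT_QQ by auto
      show "p \<in> R"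
      proof (cases "\<exists>t. p = chart (0,t)")
        case True
        then obtain t where t: "p = chart (0,t)" by blast
        then have "1 \<le> cmod t" using pC chart_CC[of "(0,t)"] by simp
        then show ?thesis unfolding R_def using t by blast
      next
        case False
        then have "p = hpt 0" using blowup_fst0[OF pb] by blast
        then show ?thesis unfolding R_def hpt0 by simp
      qed
    qed
    show "R \<subseteq> M2 \<inter> E2"
    proof
      fix p assume "p \<in> R"
      then have "p \<in> blowup \<and> fst p = (0,0) \<and> p \<in> closure (TT QQ)"
        unfolding R_def
      proof
        assume "p \<in> chart ` {(0, u2) | u2. cmod u2 \<ge> 1}"
        then obtain u where "p = chart (0,u)" "1 \<le> cmod u" by blast
        then show ?thesis using chart_E2[of u] chart_blowup[of "(0,u)"] by (simp add: chart_def)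
      next
        assume "p \<in> {((0, 0), proj_line (0, 1))}"
        then have p: "p = hpt 0" using hpt0 by simp
        have "hpt 0 \<in> closure (TT QQ)"
        proof (rule hpt0_closure)
          fix k
          have nz: "complex_of_nat (Suc k) \<noteq> 0" by (simp del: of_nat_Suc)
          have ge: "1 \<le> cmod (complex_of_nat (Suc k))" by (simp only: norm_of_nat)
          have "hpt (1 / of_nat (Suc k)) = chart (0, complex_of_nat (Suc k))"
            using hpt_chart[of "1 / complex_of_nat (Suc k)"] nz by (simp del: of_nat_Suc)
          then show "hpt (1 / of_nat (Suc k)) \<in> closure (TT QQ)"
            using chart_E2[OF ge] by simp
        qed
        then show ?thesis using p hpt_blowup unfolding hpt_def by simp
      qed
      then show "p \<in> M2 \<inter> E2" using M2 assms(5) E_eq by auto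
    qed
  qed
  have R_img: "hpt ` cball 0 1 = R"
  proof
    show "hpt ` cball 0 1 \<subseteq> R"
    proof
      fix p assume "p \<in> hpt ` cball 0 1"
      then obtain w where w: "p = hpt w" "cmod w \<le> 1" by auto
      show "p \<in> R"
      proof (cases "w = 0")
        case True then show ?thesis using w hpt0 unfolding R_def by simp
      next
        case False
        then have "p = chart (0, 1/w)" "1 \<le> cmod (1/w)"
          using w hpt_chart by (auto simp: norm_divide field_simps)
        then show ?thesis unfolding R_def by blast
      qed
    qed
    show "R \<subseteq> hpt ` cball 0 1"
    proof
      fix p assume "p \<in> R"
      then show "p \<in> hpt ` cball 0 1" unfolding R_def
      proof
        assume "p \<in> chart ` {(0, u2) | u2. cmod u2 \<ge> 1}"
        then obtain u where u: "p = chart (0,u)" "1 \<le> cmod u" by blast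
        then have u0: "u \<noteq> 0" by auto
        have "hpt (1/u) = p" using hpt_chart[of "1/u"] u u0 by simp
        moreover have "1/u \<in> cball 0 1" using u by (auto simp: norm_divide divide_le_eq)
        ultimately show ?thesis by blast
      next
        assume "p \<in> {((0, 0), proj_line (0, 1))}"
        then have "p = hpt 0" using hpt0 by simp
        moreover have "(0::complex) \<in> cball 0 1" by simp
        ultimately show ?thesis by blast
      qed
    qed
  qed
  have H: "(M2 \<inter> E2) homeomorphic cball (0::complex) 1"
  proof -
    obtain g where "homeomorphism (cball (0::complex) 1) R hpt g"
      using homeomorphism_compact[OF compact_cball continuous_on_subset[OF cont_hpt] R_img inj_on_subset[OF hpt_inj]]
      by blast
    then have "cball (0::complex) 1 homeomorphic R" unfolding homeomorphic_def by blast
    then show ?thesis using B homeomorphic_sym by blast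
  qed
  have C: "chart (0,0) \<notin> M2" using M2 closure_TT_QQ chart_CC[of "(0,0)"] by auto
  have D: "M3 \<inter> E3 = {}"
  proof -
    have "chart -` M2 \<subseteq> {q. 1 \<le> cmod (snd q)}"
    proof
      fix q assume "q \<in> chart -` M2"
      then have "chart q \<in> CC" using M2 closure_TT_QQ by blast
      then show "q \<in> {q. 1 \<le> cmod (snd q)}" using chart_CC by simp
    qed
    moreover have "closed {q::c2. 1 \<le> cmod (snd q)}" by (intro closed_Collect_le continuous_intros)
    ultimately have cl: "closure (chart -` M2) \<subseteq> {q. 1 \<le> cmod (snd q)}" by (rule closure_minimal)
    show ?thesis
    proof (rule ccontr)
      assume "M3 \<inter> E3 \<noteq> {}"
      then obtain p where "p \<in> M3" "p \<in> E3" by blast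
      then have "fst p \<in> closure (chart -` M2)" "fst p = (0,0)"
        using fst_closure assms(3,6) E_eq by auto
      then show False using cl by auto
    qed
  qed
  show ?thesis using A B R_def H C D by simp
qed

end
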